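(* Let $K$ be a field of characteristic $p>0$, $k=\bigcap_{n\ge0}K^{p^n}$, with $K/k$ finitely generated. Let $W_1$ be a subfield with $K^p\subset W_1\subset K$. Then there exists a subfield $W_2\subset W_1$ with $K^{p^2}\subset W_2$, $W_2\cdot K^p=W_1$ and $[W_1:W_2]=[K:W_1]$; i.e. $(K,W_1,W_2,W_2,W_2,\dots)$ is a power tower on $K$ with $[K:W_1]=[W_1:W_2]$.
   Context: $K^{p^n}=\{x^{p^n}:x\in K\}$; $A\cdot B$ is the composite of subfields. A power tower on $K$ is a sequence of subfields $W_0,W_1,\ldots$ with $W_j=W_i\cdot K^{p^j}$ for all $0\le j\le i$. *)

theory Defs
  imports Main "HOL-Library.Extended_Nat"
begin

text \<open>The field K is the whole type 'a (a type of class field); subfields are subsets.\<close>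

definition is_subfield :: "'a::field set \<Rightarrow> bool" where
  "is_subfield S \<longleftrightarrow> 0 \<in> S \<and> 1 \<in> S \<and>
     (\<forall>x\<in>S. \<forall>y\<in>S. x + y \<in> S \<and> x - y \<in> S \<and> x * y \<in> S) \<and>
     (\<forall>x\<in>S. inverse x \<in> S)"

definition frob_pow :: "nat \<Rightarrow> 'a::field set" where
  "frob_pow n = (\<lambda>x. x ^ (CHAR('a) ^ n)) ` UNIV"

definition gen_field :: "'a::field set \<Rightarrow> 'a set" where
  "gen_field A = \<Inter> {S. is_subfield S \<and> A \<subseteq> S}"

definition composite :: "'a::field set \<Rightarrow> 'a set \<Rightarrow> 'a set" where
  "composite A B = gen_field (A \<union> B)"

definition fin_gen_over :: "'a::field set \<Rightarrow> bool" where
  "fin_gen_over F \<longleftrightarrow> (\<exists>S. finite S \<and> gen_field (F \<union> S) = UNIV)"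

definition lin_span :: "'a::field set \<Rightarrow> 'a set \<Rightarrow> 'a set" where
  "lin_span F B = {\<Sum>b\<in>T. c b * b | T c. finite T \<and> T \<subseteq> B \<and> (\<forall>b\<in>T. c b \<in> F)}"

definition lin_indep :: "'a::field set \<Rightarrow> 'a set \<Rightarrow> bool" where
  "lin_indep F B \<longleftrightarrow> (\<forall>T c. finite T \<and> T \<subseteq> B \<and> (\<forall>b\<in>T. c b \<in> F) \<and>
      (\<Sum>b\<in>T. c b * b) = 0 \<longrightarrow> (\<forall>b\<in>T. c b = 0))"

definition is_basis :: "'a::field set \<Rightarrow> 'a set \<Rightarrow> 'a set \<Rightarrow> bool" where
  "is_basis F E B \<longleftrightarrow> B \<subseteq> E \<and> lin_indep F B \<and> lin_span F B = E"

definition ext_degree :: "'a::field set \<Rightarrow> 'a set \<Rightarrow> enat" where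
  "ext_degree E F = (if \<exists>B. finite B \<and> is_basis F E B
      then enat (card (SOME B. finite B \<and> is_basis F E B)) else \<infinity>)"

end

theory Submission
  imports Defs "HOL-Algebra.Embedded_Algebras" "HOL-Computational_Algebra.Primes" "HOL-Computational_Algebra.Polynomial"
begin


definition RR :: "'a::field ring" where
  "RR = \<lparr>carrier = UNIV, monoid.mult = (\<lambda>x y. x * y), one = 1, ring.zero = 0, add = (\<lambda>x y. x + y)\<rparr>"

lemma RR_simps [simp]: "carrier RR = UNIV" "monoid.mult RR = (*)" "monoid.one RR = 1" "ring.zero RR = 0" "ring.add RR = (+)"
  by (auto simp: RR_def fun_eq_iff)

lemma field_RR: "field (RR :: 'a::field ring)"
proof -
  have "\<exists>y. x + y = 0" for x :: 'a
    using add.right_inverse by blast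
  moreover have "x \<noteq> 0 \<Longrightarrow> \<exists>y. x * y = 1" for x :: 'a
    by (rule exI[of _ "inverse x"]) auto
  ultimately show ?thesis
    unfolding RR_def using add.right_inverse
    by unfold_locales (auto simp:algebra_simps Units_def)
qed

interpretation R: field "RR :: 'a::field ring" by (rule field_RR)

lemma RR_inv: "(x::'a::field) \<noteq> 0 \<Longrightarrow> inv\<^bsub>RR\<^esub> x = inverse x"
  by (metis R.comm_inv_char RR_simps UNIV_I right_inverse)

lemma sf_0: "is_subfield S \<Longrightarrow> 0 \<in> S" by (simp add: is_subfield_def)
lemma sf_1: "is_subfield S \<Longrightarrow> 1 \<in> S" by (simp add: is_subfield_def)
lemma sf_add: "is_subfield S \<Longrightarrow> x \<in> S \<Longrightarrow> y \<in> S \<Longrightarrow> x + y \<in> S" by (simp add: is_subfield_def)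
lemma sf_diff: "is_subfield S \<Longrightarrow> x \<in> S \<Longrightarrow> y \<in> S \<Longrightarrow> x - y \<in> S" by (simp add: is_subfield_def)
lemma sf_mult: "is_subfield S \<Longrightarrow> x \<in> S \<Longrightarrow> y \<in> S \<Longrightarrow> x * y \<in> S" by (simp add: is_subfield_def)
lemma sf_inverse: "is_subfield S \<Longrightarrow> x \<in> S \<Longrightarrow> inverse x \<in> S" by (simp add: is_subfield_def)
lemma sf_uminus: "is_subfield S \<Longrightarrow> x \<in> S \<Longrightarrow> - x \<in> S"
  using sf_diff[of S 0 x] sf_0[of S] by simp
lemma sf_divide: "is_subfield S \<Longrightarrow> x \<in> S \<Longrightarrow> y \<in> S \<Longrightarrow> x / y \<in> S"
  by (simp add: divide_inverse sf_mult sf_inverse)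
lemma sf_power: "is_subfield S \<Longrightarrow> x \<in> S \<Longrightarrow> x ^ n \<in> S"
  by (induction n) (auto intro: sf_1 sf_mult)
lemma sf_sum: "is_subfield S \<Longrightarrow> (\<And>x. x \<in> A \<Longrightarrow> f x \<in> S) \<Longrightarrow> sum f A \<in> S"
  by (induction A rule: infinite_finite_induct) (auto intro: sf_0 sf_add)
lemma sf_of_nat: "is_subfield S \<Longrightarrow> of_nat n \<in> S"
  by (induction n) (auto intro: sf_0 sf_1 sf_add)

lemma RR_uminus [simp]: "\<ominus>\<^bsub>RR\<^esub> (x::'a::field) = - x"
  by (rule R.minus_equality) auto

lemma RR_minus [simp]: "(x::'a::field) \<ominus>\<^bsub>RR\<^esub> y = x - y"
  by (simp add: R.minus_eq)

lemma subfield_RR: "is_subfield S \<Longrightarrow> subfield S (RR :: 'a::field ring)"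
proof (rule R.subfieldI')
  assume S: "is_subfield S"
  show "subring S RR"
    by (rule R.subringI) (auto intro: sf_1 sf_mult sf_add sf_uminus S)
  show "inv\<^bsub>RR\<^esub> k \<in> S" if "k \<in> S - {\<zero>\<^bsub>RR\<^esub>}" for k
    using that RR_inv[of k] sf_inverse[OF S, of k] by auto
qed



lemma lin_span_empty: "lin_span F {} = {0}"
  unfolding lin_span_def by auto

lemma lin_span_insert:
  assumes F: "is_subfield F" and u: "u \<notin> B"
  shows "lin_span F (insert u B) = {k * u + v | k v. k \<in> F \<and> v \<in> lin_span F B}"
proof safe
  fix x assume "x \<in> lin_span F (insert u B)"
  then obtain T c where T: "x = (\<Sum>b\<in>T. c b * b)" "finite T" "T \<subseteq> insert u B" "\<forall>b\<in>T. c b \<in> F"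
    unfolding lin_span_def by blast
  show "\<exists>k v. x = k * u + v \<and> k \<in> F \<and> v \<in> lin_span F B"
  proof (cases "u \<in> T")
    case True
    have "x = c u * u + (\<Sum>b\<in>T - {u}. c b * b)"
      using T True by (simp add: sum.remove)
    moreover have "(\<Sum>b\<in>T - {u}. c b * b) \<in> lin_span F B"
      unfolding lin_span_def using T by blast
    ultimately show ?thesis using T True by blast
  next
    case False
    have "x = 0 * u + x" by simp
    moreover have "x \<in> lin_span F B"
      unfolding lin_span_def using T False by blast
    ultimately show ?thesis using sf_0[OF F] by blast
  qed
next
  fix k v assume k: "k \<in> F" and "v \<in> lin_span F B"
  then obtain T c where T: "v = (\<Sum>b\<in>T. c b * b)" "finite T" "T \<subseteq> B" "\<forall>b\<in>T. c b \<in> F"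
    unfolding lin_span_def by blast
  have uT: "u \<notin> T" using T u by blast
  have "k * u + v = (\<Sum>b\<in>insert u T. (c(u := k)) b * b)"
    using T uT by (simp add: sum.insert) (intro sum.cong, auto)
  moreover have "\<forall>b\<in>insert u T. (c(u := k)) b \<in> F" using T k by auto
  ultimately show "k * u + v \<in> lin_span F (insert u B)"
    unfolding lin_span_def using T by blast
qed

lemma lin_span_Span:
  assumes F: "is_subfield F" and "distinct Us"
  shows "lin_span F (set Us) = R.Span F Us"
  using assms(2)
proof (induction Us)
  case Nil
  then show ?case by (simp add: lin_span_empty)
next
  case (Cons u Us)
  have "R.Span F (u#Us) = R.line_extension F u (R.Span F Us)" by simp
  then show ?case using Cons
    by (auto simp: lin_span_insert[OF F] R.line_extension_mem_iff simp del: R.Span.simps) blast+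
qed

lemma lin_indep_mono: "lin_indep F B \<Longrightarrow> B' \<subseteq> B \<Longrightarrow> lin_indep F B'"
  unfolding lin_indep_def by blast

lemma lin_indep_insert:
  assumes F: "is_subfield F" and u: "u \<notin> B"
  shows "lin_indep F (insert u B) \<longleftrightarrow> u \<notin> lin_span F B \<and> lin_indep F B"
proof safe
  assume I: "lin_indep F (insert u B)"
  then show "lin_indep F B" using lin_indep_mono by blast
  assume "u \<in> lin_span F B"
  then obtain T c where T: "u = (\<Sum>b\<in>T. c b * b)" "finite T" "T \<subseteq> B" "\<forall>b\<in>T. c b \<in> F"
    unfolding lin_span_def by blast
  have uT: "u \<notin> T" using T u by blast
  have "(\<Sum>b\<in>insert u T. (c(u := -1)) b * b) = - u + (\<Sum>b\<in>T. c b * b)"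
    using T uT by (simp add: sum.insert) (intro sum.cong, auto)
  also have "\<dots> = 0" using T by simp
  finally have "(\<Sum>b\<in>insert u T. (c(u := -1)) b * b) = 0" .
  moreover have "\<forall>b\<in>insert u T. (c(u := -1)) b \<in> F" using T sf_uminus[OF F sf_1[OF F]] by auto
  ultimately have "\<forall>b\<in>insert u T. (c(u := -1)) b = 0"
    using I T unfolding lin_indep_def by (meson insert_mono finite_insert)
  then show False by simp
next
  assume nu: "u \<notin> lin_span F B" and I: "lin_indep F B"
  show "lin_indep F (insert u B)"
    unfolding lin_indep_def
  proof (intro allI impI)
    fix T c assume H: "finite T \<and> T \<subseteq> insert u B \<and> (\<forall>b\<in>T. c b \<in> F) \<and> (\<Sum>b\<in>T. c b * b) = 0"
    show "\<forall>b\<in>T. c b = 0"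
    proof (cases "u \<in> T")
      case False
      then show ?thesis using H I unfolding lin_indep_def by blast
    next
      case True
      have S: "c u * u + (\<Sum>b\<in>T - {u}. c b * b) = 0"
        using H True sum.remove[of T u "\<lambda>b. c b * b"] by auto
      have cu: "c u = 0"
      proof (rule ccontr)
        assume cu: "c u \<noteq> 0"
        have "u = (\<Sum>b\<in>T - {u}. (- c b / c u) * b)"
        proof -
          have "u = - (\<Sum>b\<in>T - {u}. c b * b) / c u"
            using S cu by (simp add: eq_neg_iff_add_eq_0 field_simps add.commute)
          also have "\<dots> = (\<Sum>b\<in>T - {u}. (- c b / c u) * b)"
            by (simp add: sum_divide_distrib sum_negf[symmetric])
          finally show ?thesis .
        qed
        moreover have "\<forall>b\<in>T - {u}. - c b / c u \<in> F"
          using H True F by (auto intro!: sf_divide sf_uminus)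
        ultimately have "\<exists>T' c'. u = (\<Sum>b\<in>T'. c' b * b) \<and> finite T' \<and> T' \<subseteq> B \<and> (\<forall>b\<in>T'. c' b \<in> F)"
          using H by (intro exI[of _ "T - {u}"] exI[of _ "\<lambda>b. - c b / c u"]) auto
        then have "u \<in> lin_span F B"
          unfolding lin_span_def by blast
        with nu show False by simp
      qed
      then have "(\<Sum>b\<in>T - {u}. c b * b) = 0" using S by simp
      then have "\<forall>b\<in>T - {u}. c b = 0"
      proof -
        have "finite (T - {u}) \<and> T - {u} \<subseteq> B \<and> (\<forall>b\<in>T - {u}. c b \<in> F)" using H by auto
        then show ?thesis using I \<open>(\<Sum>b\<in>T - {u}. c b * b) = 0\<close> unfolding lin_indep_def by blast
      qed
      then show ?thesis using cu by blast
    qed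
  qed
qed

lemma lin_indep_empty: "lin_indep F {}"
  unfolding lin_indep_def by auto

lemma lin_indep_independent:
  assumes F: "is_subfield F" and "distinct Us"
  shows "lin_indep F (set Us) \<longleftrightarrow> R.independent F Us"
  using assms(2)
proof (induction Us)
  case Nil
  then show ?case by (simp add: lin_indep_empty)
next
  case (Cons u Us)
  have "R.independent F (u # Us) \<longleftrightarrow> u \<notin> R.Span F Us \<and> R.independent F Us"
    using R.independent_backwards[of F u Us] R.independent.li_Cons[of u F Us] by auto
  then show ?case using Cons lin_indep_insert[OF F, of u "set Us"] lin_span_Span[OF F, of Us] by auto
qed

lemma dim_of_basis:
  assumes F: "is_subfield F" and B: "finite B" "lin_indep F B" "lin_span F B = E"
  shows "R.dimension (card B) F E"
proof -
  obtain Us where Us: "set Us = B" "distinct Us" using finite_distinct_list[OF B(1)] by blast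
  have "R.independent F Us" using lin_indep_independent[OF F Us(2)] Us B by simp
  then have "R.dimension (length Us) F (R.Span F Us)" by (rule R.dimension_independent)
  moreover have "R.Span F Us = E" using lin_span_Span[OF F Us(2)] Us B by simp
  moreover have "length Us = card B" using Us distinct_card by fastforce
  ultimately show ?thesis by simp
qed

lemma ext_degree_dim:
  assumes F: "is_subfield F" and D: "R.dimension n F E"
  shows "ext_degree E F = enat n"
proof -
  obtain Us where Us: "set Us \<subseteq> carrier RR" "R.independent F Us" "length Us = n" "R.Span F Us = E"
    using R.exists_base[OF subfield_RR[OF F] D] by blast
  have dist: "distinct Us" using R.independent_distinct[OF subfield_RR[OF F] Us(2)] .
  have "is_basis F E (set Us)"
    unfolding is_basis_def
    using lin_indep_independent[OF F dist] lin_span_Span[OF F dist] Us R.Span_base_incl[OF subfield_RR[OF F] Us(1)]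
    by auto
  then have ex: "\<exists>B. finite B \<and> is_basis F E B" by blast
  define B where "B = (SOME B. finite B \<and> is_basis F E B)"
  have B: "finite B \<and> is_basis F E B" unfolding B_def using someI_ex[OF ex] .
  then have "R.dimension (card B) F E"
    using dim_of_basis[OF F] unfolding is_basis_def by blast
  then have "card B = n" using R.dimension_is_inj[OF subfield_RR[OF F] _ D] by blast
  then show ?thesis using ex unfolding ext_degree_def B_def by simp
qed



section \<open>Generated subfields\<close>

lemma sf_UNIV: "is_subfield (UNIV :: 'a::field set)"
  by (simp add: is_subfield_def)

lemma gen_sub: "is_subfield (gen_field A)"
  unfolding gen_field_def is_subfield_def by auto

lemma gen_incl: "A \<subseteq> gen_field A"
  unfolding gen_field_def by auto

lemma gen_min: "is_subfield S \<Longrightarrow> A \<subseteq> S \<Longrightarrow> gen_field A \<subseteq> S"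
  unfolding gen_field_def by auto

lemma gen_mono: "A \<subseteq> B \<Longrightarrow> gen_field A \<subseteq> gen_field B"
  by (meson gen_incl gen_min gen_sub order_trans)

lemma gen_idem: "is_subfield S \<Longrightarrow> gen_field S = S"
  by (simp add: gen_incl gen_min subset_antisym)

lemma gen_gen: "gen_field (gen_field A \<union> B) = gen_field (A \<union> B)"
proof
  show "gen_field (gen_field A \<union> B) \<subseteq> gen_field (A \<union> B)"
    by (intro gen_min gen_sub) (meson gen_incl gen_mono le_sup_iff sup_ge1 sup_ge2 order_trans)
  show "gen_field (A \<union> B) \<subseteq> gen_field (gen_field A \<union> B)"
    by (intro gen_mono) (use gen_incl in blast)
qed

lemma gen_absorb: "x \<in> gen_field A \<Longrightarrow> gen_field (insert x A) = gen_field A"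
  by (metis gen_gen gen_idem gen_sub insert_absorb insert_is_Un sup_commute)

section \<open>Frobenius\<close>

definition frob :: "'a::field \<Rightarrow> 'a" where "frob x = x ^ CHAR('a)"

context
  assumes cp: "CHAR('a::field) > 0"
begin

lemma prime_p: "prime CHAR('a)"
  using prime_CHAR_semidom[OF cp] .

lemma frob_add: "frob ((x::'a) + y) = frob x + frob y"
  unfolding frob_def using freshmans_dream[OF prime_p] by simp

lemma frob_mult: "frob ((x::'a) * y) = frob x * frob y"
  unfolding frob_def by (simp add: power_mult_distrib)

lemma frob_uminus: "frob (- (x::'a)) = - frob x"
  unfolding frob_def using minus_power_prime_CHAR[OF refl prime_p] by simp

lemma frob_diff: "frob ((x::'a) - y) = frob x - frob y"
  using frob_add[of x "-y"] frob_uminus[of y] by simp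

lemma frob_inverse: "frob (inverse (x::'a)) = inverse (frob x)"
  unfolding frob_def by (simp add: power_inverse)

lemma frob_0 [simp]: "frob (0::'a) = 0"
  unfolding frob_def using cp by simp

lemma frob_1 [simp]: "frob (1::'a) = 1"
  unfolding frob_def by simp

lemma frob_inj: "inj (frob :: 'a \<Rightarrow> 'a)"
proof (rule injI)
  fix x y :: 'a assume "frob x = frob y"
  then have "frob (x - y) = 0" by (simp add: frob_diff)
  then show "x = y" unfolding frob_def using cp by simp
qed

lemma frob_sum: "frob (sum f A) = (\<Sum>x\<in>A. frob (f x :: 'a))"
  by (induction A rule: infinite_finite_induct) (auto simp: frob_add)

lemma frob_image_sub:
  assumes "is_subfield (S::'a set)" shows "is_subfield (frob ` S)"
proof -
  have "0 \<in> frob ` S" using sf_0[OF assms] frob_0 by (metis rev_image_eqI)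
  moreover have "1 \<in> frob ` S" using sf_1[OF assms] frob_1 by (metis rev_image_eqI)
  moreover have "x + y \<in> frob ` S \<and> x - y \<in> frob ` S \<and> x * y \<in> frob ` S"
    if hxy: "x \<in> frob ` S" "y \<in> frob ` S" for x y
  proof -
    obtain a b where "a \<in> S" "b \<in> S" "x = frob a" "y = frob b" using hxy by blast
    then show ?thesis
      by (auto simp flip: frob_add frob_diff frob_mult intro!: imageI sf_add sf_diff sf_mult assms)
  qed
  moreover have "inverse x \<in> frob ` S" if hx: "x \<in> frob ` S" for x
  proof -
    obtain a where "a \<in> S" "x = frob a" using hx by blast
    then show ?thesis
      by (auto simp flip: frob_inverse intro!: imageI sf_inverse assms)
  qed
  ultimately show ?thesis unfolding is_subfield_def by blast
qed

lemma frob_preimage_sub: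
  assumes "is_subfield (S::'a set)" shows "is_subfield {x. frob x \<in> S}"
  using assms unfolding is_subfield_def
  by (auto simp: frob_add frob_diff frob_mult frob_inverse)

lemma frob_gen: "frob ` gen_field A = gen_field (frob ` (A :: 'a set))"
proof
  show "gen_field (frob ` A) \<subseteq> frob ` gen_field A"
    by (intro gen_min frob_image_sub gen_sub image_mono gen_incl)
  have "gen_field A \<subseteq> {x. frob x \<in> gen_field (frob ` A)}"
    by (intro gen_min frob_preimage_sub gen_sub) (use gen_incl in blast)
  then show "frob ` gen_field A \<subseteq> gen_field (frob ` A)" by blast
qed

lemma frob_ring_hom: "ring_hom_ring RR RR (frob :: 'a \<Rightarrow> 'a)"
  by (rule ring_hom_ringI2) (auto simp: ring_hom_def frob_add frob_mult intro: R.ring_axioms)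

lemma frob_pow_1: "frob_pow 1 = frob ` (UNIV :: 'a set)"
  unfolding frob_pow_def frob_def by simp

lemma frob_pow_2: "frob_pow 2 = frob ` (frob_pow 1 :: 'a set)"
  unfolding frob_pow_def frob_def by (auto simp: power2_eq_square power_mult image_image)

lemma sf_frob_pow_1: "is_subfield (frob_pow 1 :: 'a set)"
  unfolding frob_pow_1 using frob_image_sub[OF sf_UNIV] .

lemma sf_frob_pow_2: "is_subfield (frob_pow 2 :: 'a set)"
  unfolding frob_pow_2 using frob_image_sub[OF sf_frob_pow_1] .

lemma frob_pow_21: "(frob_pow 2 :: 'a set) \<subseteq> frob_pow 1"
  unfolding frob_pow_2 frob_pow_1 by auto

lemma frob_in_frob_pow_1: "frob (x::'a) \<in> frob_pow 1"
  unfolding frob_pow_1 by auto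

end



section \<open>Polynomials with coefficients in a subfield\<close>

definition Lp :: "'a::field set \<Rightarrow> 'a poly \<Rightarrow> bool" where
  "Lp L f \<longleftrightarrow> (\<forall>i. coeff f i \<in> L)"

context
  fixes L :: "'a::field set"
  assumes L: "is_subfield L"
begin

lemma Lp_0: "Lp L 0" unfolding Lp_def using sf_0[OF L] by simp
lemma Lp_const: "c \<in> L \<Longrightarrow> Lp L [:c:]" unfolding Lp_def using sf_0[OF L] by (simp add: coeff_pCons split: nat.split)
lemma Lp_monom: "c \<in> L \<Longrightarrow> Lp L (monom c n)" unfolding Lp_def using sf_0[OF L] by (simp add: coeff_monom)
lemma Lp_add: "Lp L f \<Longrightarrow> Lp L g \<Longrightarrow> Lp L (f + g)" unfolding Lp_def using sf_add[OF L] by simp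
lemma Lp_diff: "Lp L f \<Longrightarrow> Lp L g \<Longrightarrow> Lp L (f - g)" unfolding Lp_def using sf_diff[OF L] by simp
lemma Lp_smult: "c \<in> L \<Longrightarrow> Lp L f \<Longrightarrow> Lp L (smult c f)" unfolding Lp_def using sf_mult[OF L] by simp
lemma Lp_mult: "Lp L f \<Longrightarrow> Lp L g \<Longrightarrow> Lp L (f * g)"
  unfolding Lp_def by (auto simp: coeff_mult intro!: sf_sum[OF L] sf_mult[OF L])
lemma Lp_power: "Lp L f \<Longrightarrow> Lp L (f ^ n)"
proof (induction n)
  case 0
  show ?case unfolding Lp_def using sf_0[OF L] sf_1[OF L] by (simp add: coeff_1)
next
  case (Suc n)
  then show ?case by (simp add: Lp_mult)
qed
lemma Lp_sum: "(\<And>i. i \<in> A \<Longrightarrow> Lp L (f i)) \<Longrightarrow> Lp L (sum f A)"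
  unfolding Lp_def by (auto simp: coeff_sum intro!: sf_sum[OF L])

lemma poly_Lp_in: "Lp L f \<Longrightarrow> x \<in> L \<Longrightarrow> poly f x \<in> L"
  unfolding Lp_def poly_altdef by (auto intro!: sf_sum[OF L] sf_mult[OF L] sf_power[OF L])

lemma Lp_div:
  assumes f: "Lp L f" "lead_coeff f = 1" and g: "Lp L g"
  shows "\<exists>r. Lp L r \<and> (r = 0 \<or> degree r < degree f) \<and> f dvd (g - r)"
  using g
proof (induction "degree g" arbitrary: g rule: less_induct)
  case less
  show ?case
  proof (cases "degree f = 0")
    case True
    then have "f = [:coeff f 0:]" by (simp add: degree_0_id)
    also have "coeff f 0 = 1" using f(2) True by simp
    finally have "f = 1" by (simp add: pCons_one)
    then show ?thesis using Lp_0 by auto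
  next
    case df: False
    show ?thesis
    proof (cases "degree g < degree f")
      case True
      then show ?thesis using less.prems by (intro exI[of _ g]) auto
    next
      case False
      define k where "k = degree g - degree f"
      define g' where "g' = g - monom (lead_coeff g) k * f"
      have kk: "k + degree f = degree g" using False k_def by simp
      have Lg': "Lp L g'" unfolding g'_def
      proof (intro Lp_diff Lp_mult Lp_monom)
        show "Lp L g" "Lp L f" by fact+
        show "lead_coeff g \<in> L" using less.prems unfolding Lp_def by blast
      qed
      have "degree (monom (lead_coeff g) k * f) \<le> degree g"
        using degree_mult_le[of "monom (lead_coeff g) k" f] degree_monom_le[of "lead_coeff g" k] kk
        by linarith
      then have dle: "degree g' \<le> degree g" unfolding g'_def
        using degree_diff_le by blast
      have c0: "coeff g' (degree g) = 0"
      proof -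
        have "degree g - k = degree f" using kk by simp
        then show ?thesis unfolding g'_def using f(2) kk by (simp add: coeff_monom_mult)
      qed
      have "degree g' < degree g"
      proof (rule ccontr)
        assume "\<not> degree g' < degree g"
        then have "degree g' = degree g" using dle by simp
        then have "g' = 0" using c0 by (metis leading_coeff_0_iff)
        then show False using \<open>\<not> degree g' < degree g\<close> df False by simp
      qed
      then obtain r where r: "Lp L r" "r = 0 \<or> degree r < degree f" "f dvd (g' - r)"
        using less.hyps[OF _ Lg'] by blast
      have eqg: "g - r = (g' - r) + monom (lead_coeff g) k * f" unfolding g'_def by simp
      have "f dvd (g - r)" unfolding eqg
        using r(3) by (intro dvd_add) auto
      then show ?thesis using r by blast
    qed
  qed
qed

end

lemma linear_power_divisor:
  fixes y :: "'a::field"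
  shows "f * g = [:-y, 1:] ^ n \<Longrightarrow> \<exists>c. f = smult c ([:-y, 1:] ^ degree f)"
proof (induction n arbitrary: f g)
  case 0
  then have "f \<noteq> 0" "g \<noteq> 0" by (metis mult_zero_left mult_zero_right one_neq_zero power_0)+
  then have "degree f = 0" using degree_mult_eq[of f g] 0 by simp
  then show ?case by (metis degree_0_id power_0 smult_one)
next
  case (Suc n)
  have "([:-y, 1:] :: 'a poly) \<noteq> 0" by simp
  then have nz: "([:-y, 1:] :: 'a poly) ^ Suc n \<noteq> 0" by (rule power_not_zero)
  have fg0: "f \<noteq> 0" "g \<noteq> 0" using Suc.prems nz by (metis mult_zero_left mult_zero_right)+
  have "poly f y * poly g y = 0" using arg_cong[OF Suc.prems, of "\<lambda>h. poly h y"] by simp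
  then consider "poly f y = 0" | "poly g y = 0" by auto
  then show ?case
  proof cases
    case 1
    then obtain f1 where f1: "f = [:-y, 1:] * f1" using poly_eq_0_iff_dvd by (metis dvdE)
    have "[:-y, 1:] * (f1 * g) = f * g" using f1 by (simp only: mult.assoc)
    also have "\<dots> = [:-y, 1:] * [:-y, 1:] ^ n" using Suc.prems by (simp only: power_Suc)
    finally have "[:-y, 1:] * (f1 * g) = [:-y, 1:] * [:-y, 1:] ^ n" .
    then have "f1 * g = [:-y, 1:] ^ n" by (metis mult_left_cancel pCons_eq_0_iff one_neq_zero)
    then obtain c where c: "f1 = smult c ([:-y, 1:] ^ degree f1)" using Suc.IH by blast
    have "f1 \<noteq> 0" using fg0 f1 by auto
    then have "degree f = Suc (degree f1)" using f1 degree_mult_eq[of "[:-y,1:]" f1] by simp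
    moreover have "f = [:-y, 1:] * smult c ([:-y, 1:] ^ degree f1)" using f1 c by metis
    moreover have "[:-y, 1:] * smult c ([:-y, 1:] ^ degree f1) = smult c ([:-y, 1:] ^ Suc (degree f1))"
      by (simp only: mult_smult_right power_Suc)
    ultimately show ?thesis by metis
  next
    case 2
    then obtain g1 where g1: "g = [:-y, 1:] * g1" using poly_eq_0_iff_dvd by (metis dvdE)
    have "[:-y, 1:] * (f * g1) = f * g" using g1 by (metis mult.left_commute)
    also have "\<dots> = [:-y, 1:] * [:-y, 1:] ^ n" using Suc.prems by (simp only: power_Suc)
    finally have "[:-y, 1:] * (f * g1) = [:-y, 1:] * [:-y, 1:] ^ n" .
    then have "f * g1 = [:-y, 1:] ^ n" by (metis mult_left_cancel pCons_eq_0_iff one_neq_zero)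
    then show ?thesis using Suc.IH by blast
  qed
qed

lemma coeff_linear_power_pred:
  fixes y :: "'a::field"
  assumes "d > 0"
  shows "coeff ([:-y, 1:] ^ d) (d - 1) = - (of_nat d * y)"
proof -
  have "d choose (d - 1) = d" using binomial_symmetric[of 1 d] assms by simp
  then show ?thesis using coeff_linear_poly_power[of "d - 1" d "-y" 1] assms by simp
qed



lemma linear_pow_char:
  assumes cp: "CHAR('a::field) > 0"
  shows "[:-y, 1:] ^ CHAR('a) = monom 1 CHAR('a) - [:(y::'a) ^ CHAR('a):]"
proof -
  have pr: "prime CHAR('a poly)" using prime_CHAR_semidom[OF cp] by simp
  have "[:-y, 1:] = monom 1 1 + [:-y:]" by (simp add: monom_Suc)
  then have "[:-y, 1:] ^ CHAR('a) = (monom 1 1 + [:-y:]) ^ CHAR('a poly)" by simp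
  also have "\<dots> = monom 1 1 ^ CHAR('a poly) + [:-y:] ^ CHAR('a poly)"
    by (rule freshmans_dream[OF pr refl])
  also have "\<dots> = monom 1 CHAR('a) + [:(-y) ^ CHAR('a):]"
    by (simp add: monom_power poly_const_pow)
  also have "(-y) ^ CHAR('a) = - (y ^ CHAR('a))"
    using minus_power_prime_CHAR[OF refl prime_CHAR_semidom[OF cp]] .
  finally show ?thesis by simp
qed

context
  fixes L :: "'a::field set" and y :: 'a
  assumes cp: "CHAR('a) > 0" and L: "is_subfield L" and ya: "y ^ CHAR('a) \<in> L"
begin

definition g0 :: "'a poly" where "g0 = monom 1 CHAR('a) - [:y ^ CHAR('a):]"

lemma g0_Lp: "Lp L g0"
  unfolding g0_def using L ya by (intro Lp_diff Lp_monom Lp_const sf_1)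

lemma g0_coeff: "coeff g0 i = (if i = CHAR('a) then 1 else 0) - (if i = 0 then y ^ CHAR('a) else 0)"
  unfolding g0_def by (simp add: coeff_monom coeff_pCons split: nat.split)

lemma g0_degree: "degree g0 = CHAR('a)"
proof (rule antisym)
  show "degree g0 \<le> CHAR('a)" by (rule degree_le) (auto simp: g0_coeff)
  show "CHAR('a) \<le> degree g0" by (rule le_degree) (use cp in \<open>auto simp: g0_coeff\<close>)
qed

lemma g0_lead: "lead_coeff g0 = 1"
  using cp by (simp add: g0_degree g0_coeff)

lemma g0_poly: "poly g0 y = 0"
  unfolding g0_def by (simp add: poly_monom)

lemma reduce:
  assumes "Lp L g"
  shows "\<exists>h. Lp L h \<and> degree h < CHAR('a) \<and> poly h y = poly g y"
proof -
  obtain r where r: "Lp L r" "r = 0 \<or> degree r < degree g0" "g0 dvd (g - r)"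
    using Lp_div[OF L g0_Lp g0_lead assms] by blast
  obtain q where q: "g - r = g0 * q" using r(3) by blast
  have "poly (g - r) y = 0" unfolding q by (simp add: g0_poly)
  then have "poly r y = poly g y" by simp
  moreover have "degree r < CHAR('a)" using r(2) cp g0_degree by auto
  ultimately show ?thesis using r(1) by blast
qed

definition Pset :: "'a set" where "Pset = {poly g y | g. Lp L g}"

lemma PsetI: "Lp L g \<Longrightarrow> poly g y \<in> Pset"
  unfolding Pset_def by blast

lemma pow_char_in_L:
  assumes "Lp L g" shows "(poly g y) ^ CHAR('a) \<in> L"
proof -
  have "(poly g y) ^ CHAR('a) = (\<Sum>i\<le>degree g. (coeff g i * y ^ i) ^ CHAR('a))"
    unfolding poly_altdef by (rule freshmans_dream_sum[OF prime_CHAR_semidom[OF cp] refl])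
  also have "\<dots> = (\<Sum>i\<le>degree g. coeff g i ^ CHAR('a) * (y ^ CHAR('a)) ^ i)"
    by (simp add: power_mult_distrib flip: power_mult) (simp add: mult.commute)
  also have "\<dots> \<in> L"
    using assms ya unfolding Lp_def by (intro sf_sum[OF L] sf_mult[OF L] sf_power[OF L ya] sf_power[OF L]) auto
  finally show ?thesis .
qed

lemma Pset_sub: "is_subfield Pset"
  unfolding is_subfield_def
proof (intro conjI ballI)
  show "0 \<in> Pset" using PsetI[OF Lp_0[OF L]] by simp
  show "1 \<in> Pset" using PsetI[OF Lp_const[OF L sf_1[OF L]]] by simp
  fix a b assume "a \<in> Pset" "b \<in> Pset"
  then obtain f g where fg: "Lp L f" "Lp L g" "a = poly f y" "b = poly g y" unfolding Pset_def by blast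
  show "a + b \<in> Pset" using fg PsetI[OF Lp_add[OF L fg(1,2)]] by simp
  show "a - b \<in> Pset" using fg PsetI[OF Lp_diff[OF L fg(1,2)]] by simp
  show "a * b \<in> Pset" using fg PsetI[OF Lp_mult[OF L fg(1,2)]] by simp
next
  fix a assume "a \<in> Pset"
  then obtain f where f: "Lp L f" "a = poly f y" unfolding Pset_def by blast
  have w: "inverse (a ^ CHAR('a)) \<in> L" using pow_char_in_L[OF f(1)] f(2) sf_inverse[OF L] by simp
  have pa: "a ^ CHAR('a) = a ^ (CHAR('a) - 1) * a"
  proof -
    have "CHAR('a) = Suc (CHAR('a) - 1)" using cp by simp
    then have "a ^ CHAR('a) = a ^ Suc (CHAR('a) - 1)" by (rule arg_cong)
    then show ?thesis by (simp only: power_Suc2)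
  qed
  have "inverse a = a ^ (CHAR('a) - 1) * inverse (a ^ CHAR('a))"
  proof (cases "a = 0")
    case True
    have "CHAR('a) \<noteq> 0" using cp by simp
    then show ?thesis using True by (simp add: zero_power)
  next
    case False
    have "a ^ (CHAR('a) - 1) * inverse (a ^ CHAR('a)) = a ^ (CHAR('a) - 1) * (inverse (a ^ (CHAR('a) - 1)) * inverse a)"
      by (simp only: pa inverse_mult_distrib)
    also have "\<dots> = (a ^ (CHAR('a) - 1) * inverse (a ^ (CHAR('a) - 1))) * inverse a"
      by (simp only: mult.assoc)
    also have "\<dots> = inverse a" using False by simp
    finally show ?thesis by (rule sym)
  qed
  also have "\<dots> = poly (f ^ (CHAR('a) - 1) * [:inverse (a ^ CHAR('a)):]) y"
    unfolding poly_mult poly_power f(2) by simp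
  finally have eq: "inverse a = poly (f ^ (CHAR('a) - 1) * [:inverse (a ^ CHAR('a)):]) y" .
  show "inverse a \<in> Pset"
    unfolding eq by (rule PsetI[OF Lp_mult[OF L Lp_power[OF L f(1)] Lp_const[OF L w]]])
qed

lemma Pset_gen: "Pset = gen_field (L \<union> {y})"
proof
  show "gen_field (L \<union> {y}) \<subseteq> Pset"
  proof (rule gen_min[OF Pset_sub])
    have "c \<in> Pset" if "c \<in> L" for c
      using PsetI[OF Lp_const[OF L that]] by simp
    moreover have "y \<in> Pset" using PsetI[OF Lp_monom[OF L sf_1[OF L], of 1]]
      by (simp add: poly_monom)
    ultimately show "L \<union> {y} \<subseteq> Pset" by blast
  qed
  show "Pset \<subseteq> gen_field (L \<union> {y})"
  proof
    fix a assume "a \<in> Pset"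
    then obtain f where f: "Lp L f" "a = poly f y" unfolding Pset_def by blast
    have LG: "L \<subseteq> gen_field (L \<union> {y})" "y \<in> gen_field (L \<union> {y})" using gen_incl by blast+
    show "a \<in> gen_field (L \<union> {y})" unfolding f(2) poly_altdef
      using f(1) LG unfolding Lp_def
      by (intro sf_sum[OF gen_sub] sf_mult[OF gen_sub] sf_power[OF gen_sub]) auto
  qed
qed


lemma KL_poly:
  assumes yL: "y \<notin> L" and f: "Lp L f" "f \<noteq> 0" "poly f y = 0"
  shows "CHAR('a) \<le> degree f"
proof (rule ccontr)
  assume nle: "\<not> CHAR('a) \<le> degree f"
  let ?P = "\<lambda>f. Lp L f \<and> f \<noteq> 0 \<and> poly f y = 0"
  obtain f0 where f0: "?P f0" and min: "\<And>g. ?P g \<Longrightarrow> degree f0 \<le> degree g"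
    using ex_has_least_nat[of ?P f degree] f by blast
  have dlt: "degree f0 < CHAR('a)" using min[of f] f nle by simp
  have lc0: "lead_coeff f0 \<noteq> 0" using f0 by simp
  have lcL: "lead_coeff f0 \<in> L" using f0 unfolding Lp_def by blast
  define f1 where "f1 = smult (inverse (lead_coeff f0)) f0"
  have f1L: "Lp L f1" unfolding f1_def using f0 lcL by (intro Lp_smult[OF L] sf_inverse[OF L]) auto
  have f1lead: "lead_coeff f1 = 1" unfolding f1_def using lc0 by (simp add: lead_coeff_smult)
  have f1deg: "degree f1 = degree f0" unfolding f1_def using lc0 by simp
  have f1y: "poly f1 y = 0" unfolding f1_def using f0 by simp
  obtain r where r: "Lp L r" "r = 0 \<or> degree r < degree f1" "f1 dvd (g0 - r)"
    using Lp_div[OF L f1L f1lead g0_Lp] by blast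
  obtain q where q: "g0 - r = f1 * q" using r(3) by blast
  have "poly (g0 - r) y = 0" unfolding q using f1y by simp
  then have ry: "poly r y = 0" using g0_poly by simp
  have r0: "r = 0"
  proof (rule ccontr)
    assume "r \<noteq> 0"
    then have "degree f0 \<le> degree r" using min[of r] r(1) ry by blast
    then show False using r(2) \<open>r \<noteq> 0\<close> f1deg by simp
  qed
  have "f1 * q = [:-y, 1:] ^ CHAR('a)"
    using q r0 linear_pow_char[OF cp, of y] unfolding g0_def by simp
  then obtain c where c: "f1 = smult c ([:-y, 1:] ^ degree f1)"
    using linear_power_divisor by blast
  have pm: "coeff ([:-y, 1:] ^ m) m = 1" for m using coeff_linear_poly_power[of m m "-y" 1] by simp
  have pl: "lead_coeff ([:-y, 1:] ^ m) = 1" for m using lead_coeff_power[of "[:-y, 1:]" m] by simp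
  have X: "lead_coeff (smult c ([:-y, 1:] ^ degree f1)) = c" by (simp only: lead_coeff_smult pl mult_1_right)
  have "lead_coeff f1 = c" using X by (simp only: c[symmetric])
  then have c1: "c = 1" using f1lead by simp
  define d where "d = degree f1"
  have f1eq: "f1 = [:-y, 1:] ^ d" using c c1 d_def by simp
  have dpos: "d > 0"
  proof (rule ccontr)
    assume "\<not> d > 0"
    then have "f1 = 1" using f1eq by simp
    then show False using f1y by simp
  qed
  have "coeff f1 (d - 1) = - (of_nat d * y)"
    unfolding f1eq by (rule coeff_linear_power_pred[OF dpos])
  then have m: "- (of_nat d * y) \<in> L" using f1L unfolding Lp_def by metis
  have dlt2: "d < CHAR('a)" using dlt f1deg d_def by simp
  have nz: "(of_nat d :: 'a) \<noteq> 0"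
  proof
    assume "(of_nat d :: 'a) = 0"
    then have "CHAR('a) dvd d" by (simp add: of_nat_eq_0_iff_char_dvd)
    then show False using dpos dlt2 by (simp add: nat_dvd_not_less)
  qed
  have "y = - (- (of_nat d * y)) / of_nat d" using nz by simp
  also have "\<dots> \<in> L" by (rule sf_divide[OF L sf_uminus[OF L m] sf_of_nat[OF L]])
  finally show False using yL by simp
qed

lemma pow_inj:
  assumes yL: "y \<notin> L"
  shows "inj_on (\<lambda>i. y ^ i) {..<CHAR('a)}"
proof -
  have ne: "y ^ i \<noteq> y ^ j" if ij: "i < j" "j < CHAR('a)" for i j
  proof
    assume eq: "y ^ i = y ^ j"
    define f where "f = monom (1::'a) j - monom 1 i"
    have fL: "Lp L f" unfolding f_def by (intro Lp_diff[OF L] Lp_monom[OF L] sf_1[OF L])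
    have "coeff f j = 1" unfolding f_def using ij by (simp add: coeff_monom)
    then have fnz: "f \<noteq> 0" by auto
    have fy: "poly f y = 0" unfolding f_def using eq by (simp add: poly_monom)
    have "degree f \<le> j" unfolding f_def by (rule degree_le) (use ij in \<open>auto simp: coeff_monom\<close>)
    then show False using KL_poly[OF yL fL fnz fy] ij by simp
  qed
  show ?thesis
  proof (rule inj_onI)
    fix i j assume "i \<in> {..<CHAR('a)}" "j \<in> {..<CHAR('a)}" "y ^ i = y ^ j"
    then show "i = j" using ne[of i j] ne[of j i] by (cases i j rule: linorder_cases) auto
  qed
qed

lemma pow_basis_indep:
  assumes yL: "y \<notin> L"
  shows "lin_indep L ((\<lambda>i. y ^ i) ` {..<CHAR('a)})"
  unfolding lin_indep_def
proof (intro allI impI)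
  fix T c
  assume H: "finite T \<and> T \<subseteq> (\<lambda>i. y ^ i) ` {..<CHAR('a)} \<and> (\<forall>b\<in>T. c b \<in> L) \<and> (\<Sum>b\<in>T. c b * b) = 0"
  define I where "I = {i \<in> {..<CHAR('a)}. y ^ i \<in> T}"
  have TI: "T = (\<lambda>i. y ^ i) ` I" unfolding I_def using H by blast
  have injI: "inj_on (\<lambda>i. y ^ i) I" using pow_inj[OF yL] unfolding I_def by (rule inj_on_subset) auto
  define e where "e i = (if y ^ i \<in> T then c (y ^ i) else 0)" for i
  define f where "f = (\<Sum>i<CHAR('a). monom (e i) i)"
  have cf: "coeff f k = (if k < CHAR('a) then e k else 0)" for k
    unfolding f_def by (simp add: coeff_sum coeff_monom)
  have fL: "Lp L f" unfolding Lp_def cf e_def using H sf_0[OF L] by auto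
  have "poly f y = (\<Sum>i<CHAR('a). e i * y ^ i)" unfolding f_def by (simp add: poly_sum poly_monom)
  also have "\<dots> = (\<Sum>i<CHAR('a). if y ^ i \<in> T then c (y ^ i) * y ^ i else 0)"
    unfolding e_def by (intro sum.cong) auto
  also have "\<dots> = (\<Sum>i\<in>I. c (y ^ i) * y ^ i)"
    unfolding I_def by (rule sum.inter_filter[symmetric]) simp
  also have "\<dots> = (\<Sum>b\<in>T. c b * b)"
    unfolding TI by (rule sum.reindex[OF injI, symmetric, unfolded comp_def])
  also have "\<dots> = 0" using H by simp
  finally have fy: "poly f y = 0" .
  have "degree f \<le> CHAR('a) - 1" by (rule degree_le) (auto simp: cf)
  then have "degree f < CHAR('a)" using cp by simp
  then have f0: "f = 0" using KL_poly[OF yL fL _ fy] by force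
  show "\<forall>b\<in>T. c b = 0"
  proof
    fix b assume "b \<in> T"
    then obtain i where i: "i \<in> I" "b = y ^ i" using TI by blast
    have "e i = 0" using cf[of i] f0 i(1) unfolding I_def by simp
    then show "c b = 0" using i unfolding e_def I_def by simp
  qed
qed

lemma pow_basis_span:
  assumes yL: "y \<notin> L"
  shows "lin_span L ((\<lambda>i. y ^ i) ` {..<CHAR('a)}) = gen_field (L \<union> {y})"
proof
  have LG: "L \<subseteq> gen_field (L \<union> {y})" "y \<in> gen_field (L \<union> {y})" using gen_incl by blast+
  show "lin_span L ((\<lambda>i. y ^ i) ` {..<CHAR('a)}) \<subseteq> gen_field (L \<union> {y})"
  proof
    fix a assume "a \<in> lin_span L ((\<lambda>i. y ^ i) ` {..<CHAR('a)})"
    then obtain T c where T: "a = (\<Sum>b\<in>T. c b * b)" "T \<subseteq> (\<lambda>i. y ^ i) ` {..<CHAR('a)}" "\<forall>b\<in>T. c b \<in> L"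
      unfolding lin_span_def by blast
    show "a \<in> gen_field (L \<union> {y})" unfolding T(1)
      using T(2,3) LG by (intro sf_sum[OF gen_sub] sf_mult[OF gen_sub]) (auto intro: sf_power[OF gen_sub])
  qed
  show "gen_field (L \<union> {y}) \<subseteq> lin_span L ((\<lambda>i. y ^ i) ` {..<CHAR('a)})"
  proof
    fix a assume "a \<in> gen_field (L \<union> {y})"
    then have "a \<in> Pset" using Pset_gen by blast
    then obtain g where g: "Lp L g" "a = poly g y" unfolding Pset_def by blast
    obtain h where h: "Lp L h" "degree h < CHAR('a)" "poly h y = poly g y" using reduce[OF g(1)] by blast
    let ?B = "(\<lambda>i. y ^ i) ` {..<CHAR('a)}"
    define c where "c b = coeff h (the_inv_into {..<CHAR('a)} (\<lambda>i. y ^ i) b)" for b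
    have "a = (\<Sum>i\<le>degree h. coeff h i * y ^ i)" using g h by (simp add: poly_altdef)
    also have "\<dots> = (\<Sum>i<CHAR('a). coeff h i * y ^ i)"
      by (rule sum.mono_neutral_left) (use h(2) in \<open>auto simp: coeff_eq_0\<close>)
    also have "\<dots> = (\<Sum>i<CHAR('a). c (y ^ i) * y ^ i)"
      unfolding c_def by (intro sum.cong refl) (simp add: the_inv_into_f_f[OF pow_inj[OF yL]])
    also have "\<dots> = (\<Sum>b\<in>?B. c b * b)"
      by (rule sum.reindex[OF pow_inj[OF yL], symmetric, unfolded comp_def])
    finally have a: "a = (\<Sum>b\<in>?B. c b * b)" .
    have "\<forall>b\<in>?B. c b \<in> L" using h(1) unfolding c_def Lp_def by blast
    then show "a \<in> lin_span L ?B" unfolding lin_span_def using a by blast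
  qed
qed

lemma KL_dim:
  assumes yL: "y \<notin> L"
  shows "R.dimension CHAR('a) L (gen_field (L \<union> {y}))"
proof -
  have "R.dimension (card ((\<lambda>i. y ^ i) ` {..<CHAR('a)})) L (gen_field (L \<union> {y}))"
    by (rule dim_of_basis[OF L _ pow_basis_indep[OF yL] pow_basis_span[OF yL]]) simp
  then show ?thesis using card_image[OF pow_inj[OF yL]] by simp
qed

end



definition pindep :: "'a::field set \<Rightarrow> 'a set \<Rightarrow> bool" where
  "pindep L Z \<longleftrightarrow> (\<forall>z\<in>Z. z \<notin> gen_field (L \<union> (Z - {z})))"

lemma chain_dim:
  assumes cp: "CHAR('a::field) > 0" and L: "is_subfield (L::'a set)"
    and Z: "finite Z" "\<forall>z\<in>Z. z ^ CHAR('a) \<in> L" "pindep L Z"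
  shows "R.dimension (CHAR('a) ^ card Z) L (gen_field (L \<union> Z))"
  using Z
proof (induction Z rule: finite_induct)
  case empty
  then show ?case using R.dimension_one[OF subfield_RR[OF L]] gen_idem[OF L] by simp
next
  case (insert z Z)
  have pZ: "pindep L Z"
    unfolding pindep_def
  proof
    fix w assume w: "w \<in> Z"
    have "w \<notin> gen_field (L \<union> (insert z Z - {w}))" using insert.prems(2) w unfolding pindep_def by blast
    moreover have "gen_field (L \<union> (Z - {w})) \<subseteq> gen_field (L \<union> (insert z Z - {w}))" by (rule gen_mono) blast
    ultimately show "w \<notin> gen_field (L \<union> (Z - {w}))" by blast
  qed
  define M where "M = gen_field (L \<union> Z)"
  have IH: "R.dimension (CHAR('a) ^ card Z) L M" unfolding M_def using insert pZ by blast
  have M: "is_subfield M" unfolding M_def by (rule gen_sub)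
  have LM: "L \<subseteq> M" unfolding M_def using gen_incl by blast
  have zM: "z \<notin> M" using insert.prems(2) insert.hyps(2) unfolding pindep_def M_def by auto
  have zp: "z ^ CHAR('a) \<in> M" using insert.prems(1) LM by auto
  have D: "R.dimension CHAR('a) M (gen_field (M \<union> {z}))" by (rule KL_dim[OF cp M zp zM])
  have "gen_field (M \<union> {z}) = gen_field (L \<union> insert z Z)"
    unfolding M_def gen_gen by (metis Un_insert_right sup_bot_right Un_insert_left sup_assoc)
  then have "R.dimension (CHAR('a) ^ card Z * CHAR('a)) L (gen_field (L \<union> insert z Z))"
    using R.telescopic_base[OF subfield_RR[OF L] subfield_RR[OF M] IH D] by simp
  then show ?case using insert.hyps by (simp add: mult.commute)
qed

lemma min_gen:
  assumes "finite (Z::'a::field set)"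
  shows "\<exists>Z'. Z' \<subseteq> Z \<and> gen_field (L \<union> Z') = gen_field (L \<union> Z) \<and> pindep L Z'"
proof -
  let ?P = "\<lambda>Z'. Z' \<subseteq> Z \<and> gen_field (L \<union> Z') = gen_field (L \<union> Z)"
  obtain Z0 where Z0: "?P Z0" and min: "\<And>Z'. ?P Z' \<Longrightarrow> card Z0 \<le> card Z'"
    using ex_has_least_nat[of ?P Z card] by blast
  have fin: "finite Z0" using Z0 assms finite_subset by blast
  have "pindep L Z0"
    unfolding pindep_def
  proof (rule ccontr)
    assume "\<not> (\<forall>z\<in>Z0. z \<notin> gen_field (L \<union> (Z0 - {z})))"
    then obtain z where z: "z \<in> Z0" "z \<in> gen_field (L \<union> (Z0 - {z}))" by blast
    have "gen_field (L \<union> Z0) = gen_field (insert z (L \<union> (Z0 - {z})))"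
      using z(1) by (metis Un_insert_right insert_Diff)
    also have "\<dots> = gen_field (L \<union> (Z0 - {z}))" by (rule gen_absorb[OF z(2)])
    finally have "?P (Z0 - {z})" using Z0 by auto
    then have "card Z0 \<le> card (Z0 - {z})" by (rule min)
    moreover have "card (Z0 - {z}) < card Z0" using fin z(1) by (meson card_Diff1_less)
    ultimately show False by simp
  qed
  then show ?thesis using Z0 by blast
qed

lemma ub_dim:
  assumes cp: "CHAR('a::field) > 0" and L: "is_subfield (L::'a set)"
    and Z: "finite Z" "\<forall>z\<in>Z. z ^ CHAR('a) \<in> L"
  shows "\<exists>m \<le> card Z. R.dimension (CHAR('a) ^ m) L (gen_field (L \<union> Z))"
proof -
  obtain Z' where Z': "Z' \<subseteq> Z" "gen_field (L \<union> Z') = gen_field (L \<union> Z)" "pindep L Z'"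
    using min_gen[OF Z(1)] by blast
  have "R.dimension (CHAR('a) ^ card Z') L (gen_field (L \<union> Z'))"
    using chain_dim[OF cp L finite_subset[OF Z'(1) Z(1)]] Z Z' by blast
  moreover have "card Z' \<le> card Z" using Z'(1) Z(1) by (rule card_mono[rotated])
  ultimately show ?thesis using Z'(2) by auto
qed

lemma sub_alg:
  assumes "is_subfield F" "is_subfield E" "F \<subseteq> E"
  shows "subalgebra F E (RR::'a::field ring)"
proof -
  have "subring E RR" using subfieldE(1)[OF subfield_RR[OF assms(2)]] .
  then have "subgroup E (add_monoid RR)" by (rule subring.axioms(1))
  then show ?thesis unfolding subalgebra_def subalgebra_axioms_def
    using assms by (auto intro: sf_mult)
qed



theorem mainTheorem13:
  fixes W1 :: "'a::field set"
  assumes char_pos: "CHAR('a) > 0"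
    and fg: "fin_gen_over (\<Inter>n. frob_pow n :: 'a set)"
    and W1_sub: "is_subfield W1"
    and W1_ge: "frob_pow 1 \<subseteq> W1"
  shows "\<exists>W2. is_subfield W2 \<and> W2 \<subseteq> W1 \<and> frob_pow 2 \<subseteq> W2 \<and>
              composite W2 (frob_pow 1) = W1 \<and>
              ext_degree W1 W2 = ext_degree UNIV W1"
proof -
  note cp = char_pos
  define p where "p = CHAR('a)"
  define Kp :: "'a set" where "Kp = frob_pow 1"
  define Kpp :: "'a set" where "Kpp = frob_pow 2"
  have Kp: "is_subfield Kp" unfolding Kp_def by (rule sf_frob_pow_1[OF cp])
  have Kpp: "is_subfield Kpp" unfolding Kpp_def by (rule sf_frob_pow_2[OF cp])
  have KppKp: "Kpp \<subseteq> Kp" unfolding Kpp_def Kp_def by (rule frob_pow_21[OF cp])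
  have KpW1: "Kp \<subseteq> W1" unfolding Kp_def by (rule W1_ge)
  have Kp_img: "Kp = frob ` UNIV" unfolding Kp_def by (rule frob_pow_1[OF cp])
  have Kpp_img: "Kpp = frob ` Kp" unfolding Kpp_def Kp_def by (rule frob_pow_2[OF cp])
  have powKp: "x ^ p \<in> Kp" for x :: 'a
    using frob_in_frob_pow_1[OF cp, of x] unfolding Kp_def p_def frob_def .
  have frobp: "frob x = x ^ p" for x :: 'a unfolding frob_def p_def ..
  have p1: "p > 1" unfolding p_def using prime_CHAR_semidom[OF cp] prime_gt_1_nat by blast
  have one_zero: "\<one>\<^bsub>RR\<^esub> \<noteq> (\<zero>\<^bsub>RR::'a ring\<^esub>)" by simp
  have inj: "inj_on frob E" for E :: "'a set" using frob_inj[OF cp] by (rule inj_on_subset) simp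
  note hom = frob_ring_hom[OF cp]

  obtain S where S: "finite S" "gen_field ((\<Inter>n. frob_pow n :: 'a set) \<union> S) = UNIV"
    using fg unfolding fin_gen_over_def by blast
  have "(\<Inter>n. frob_pow n :: 'a set) \<subseteq> Kp" unfolding Kp_def by blast
  then have KpS: "gen_field (Kp \<union> S) = UNIV" using S(2) gen_mono[of "(\<Inter>n. frob_pow n :: 'a set) \<union> S" "Kp \<union> S"] by blast
  have W1S: "gen_field (W1 \<union> S) = UNIV" using KpS gen_mono[of "Kp \<union> S" "W1 \<union> S"] KpW1 by blast

  obtain m0 where "R.dimension (p ^ m0) Kp (gen_field (Kp \<union> S))"
    using ub_dim[OF cp Kp S(1)] powKp unfolding p_def by blast
  then have "R.finite_dimension Kp UNIV" using KpS by (metis R.finite_dimensionI)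
  then have "R.finite_dimension Kp W1"
    using R.subalbegra_incl_imp_finite_dimension[OF subfield_RR[OF Kp] _ sub_alg[OF Kp W1_sub KpW1]] by blast
  then obtain n0 where "R.dimension n0 Kp W1" by blast
  then obtain Us where Us: "set Us \<subseteq> carrier RR" "R.independent Kp Us" "R.Span Kp Us = W1"
    using R.exists_base[OF subfield_RR[OF Kp]] by blast
  have UsW1: "set Us \<subseteq> W1" using R.Span_base_incl[OF subfield_RR[OF Kp] Us(1)] Us(3) by blast
  have W1_gen0: "gen_field (Kp \<union> set Us) = W1"
  proof
    show "gen_field (Kp \<union> set Us) \<subseteq> W1" using gen_min[OF W1_sub] KpW1 UsW1 by blast
    have "set Us \<subseteq> gen_field (Kp \<union> set Us)" "Kp \<subseteq> gen_field (Kp \<union> set Us)" using gen_incl by blast+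
    then show "W1 \<subseteq> gen_field (Kp \<union> set Us)"
      using R.subalgebra_Span_incl[OF subfield_RR[OF Kp] sub_alg[OF Kp gen_sub]] Us(3) by blast
  qed
  obtain Y where Y: "Y \<subseteq> set Us" "gen_field (Kp \<union> Y) = W1" "pindep Kp Y"
    using min_gen[of "set Us" Kp] W1_gen0 by auto
  have Yfin: "finite Y" using Y(1) finite_subset by blast
  have YW1: "Y \<subseteq> W1" using Y(1) UsW1 by blast
  obtain X where X: "X \<subseteq> S" "gen_field (W1 \<union> X) = UNIV" "pindep W1 X"
    using min_gen[OF S(1), of W1] W1S by auto
  have Xfin: "finite X" using X(1) S(1) finite_subset by blast
  define t where "t = card Y"
  define s where "s = card X"

  have d1: "R.dimension (p ^ t) Kp W1"
    using chain_dim[OF cp Kp Yfin _ Y(3)] powKp Y(2) unfolding t_def p_def by auto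
  have d2: "R.dimension (p ^ s) W1 UNIV"
    using chain_dim[OF cp W1_sub Xfin _ X(3)] powKp KpW1 X(2) unfolding s_def p_def by auto
  have d3: "R.dimension (p ^ t * p ^ s) Kp UNIV"
    by (rule R.telescopic_base[OF subfield_RR[OF Kp] subfield_RR[OF W1_sub] d1 d2])
  have d4: "R.dimension (p ^ t * p ^ s) Kpp Kp"
    using ring_hom_ring.inj_hom_dimension[OF hom subfield_RR[OF Kp] one_zero inj d3]
    unfolding Kpp_img[symmetric] Kp_img[symmetric] .
  have d5: "R.dimension (p ^ t * p ^ s * p ^ t) Kpp W1"
    by (rule R.telescopic_base[OF subfield_RR[OF Kpp] subfield_RR[OF Kp] d4 d1])

  define W2 where "W2 = gen_field (Kpp \<union> Y)"
  define M where "M = gen_field (Kpp \<union> frob ` Y)"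
  have W2: "is_subfield W2" unfolding W2_def by (rule gen_sub)
  have M: "is_subfield M" unfolding M_def by (rule gen_sub)
  have M_img: "M = frob ` W1"
    unfolding M_def Y(2)[symmetric] frob_gen[OF cp] image_Un Kpp_img ..
  have d6: "R.dimension (p ^ t) Kpp M"
    using ring_hom_ring.inj_hom_dimension[OF hom subfield_RR[OF Kp] one_zero inj d1]
    unfolding Kpp_img[symmetric] M_img[symmetric] .
  have KppW2: "Kpp \<subseteq> W2" "Y \<subseteq> W2" unfolding W2_def using gen_incl by blast+
  have frobYW2: "frob ` Y \<subseteq> W2"
    using KppW2(2) sf_power[OF W2] unfolding frob_def by blast
  have W2M: "W2 = gen_field (M \<union> Y)"
  proof
    show "W2 \<subseteq> gen_field (M \<union> Y)" unfolding W2_def M_def gen_gen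
      by (rule gen_mono) blast
    show "gen_field (M \<union> Y) \<subseteq> W2" unfolding M_def gen_gen
      using KppW2 frobYW2 by (intro gen_min[OF W2]) blast
  qed
  have "\<forall>y\<in>Y. y ^ CHAR('a) \<in> M"
    unfolding M_def using gen_incl[of "Kpp \<union> frob ` Y"] unfolding frob_def by blast
  then obtain m where m: "m \<le> t" "R.dimension (p ^ m) M W2"
    using ub_dim[OF cp M Yfin] W2M unfolding t_def p_def by blast
  have d8: "R.dimension (p ^ t * p ^ m) Kpp W2"
    by (rule R.telescopic_base[OF subfield_RR[OF Kpp] subfield_RR[OF M] d6 m(2)])

  have W2W1: "W2 \<subseteq> W1" unfolding W2_def using gen_min[OF W1_sub] KppKp KpW1 YW1 by blast
  have frobXKp: "frob ` X \<subseteq> Kp" using Kp_img by blast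
  have W1_eq: "W1 = gen_field (W2 \<union> frob ` X)"
  proof (rule antisym)
    show "gen_field (W2 \<union> frob ` X) \<subseteq> W1"
      by (rule gen_min[OF W1_sub Un_least[OF W2W1 order_trans[OF frobXKp KpW1]]])
    have "gen_field (Kp \<union> Y \<union> X) = gen_field (gen_field (Kp \<union> Y) \<union> X)" by (rule gen_gen[symmetric])
    also have "\<dots> = gen_field (W1 \<union> X)" by (simp only: Y(2))
    also have "\<dots> = UNIV" by (rule X(2))
    finally have g1: "gen_field (Kp \<union> Y \<union> X) = UNIV" .
    have g2: "frob ` gen_field (Kp \<union> Y \<union> X) = gen_field (frob ` (Kp \<union> Y \<union> X))"
      by (rule frob_gen[OF cp])
    have g3: "frob ` (Kp \<union> Y \<union> X) = Kpp \<union> frob ` Y \<union> frob ` X"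
      by (simp only: image_Un Kpp_img[symmetric])
    have "Kp = frob ` UNIV" by (rule Kp_img)
    also have "\<dots> = frob ` gen_field (Kp \<union> Y \<union> X)" by (simp only: g1)
    also have "\<dots> = gen_field (Kpp \<union> frob ` Y \<union> frob ` X)" by (simp only: g2 g3)
    finally have Kp_eq: "Kp = gen_field (Kpp \<union> frob ` Y \<union> frob ` X)" .
    define G where "G = gen_field (W2 \<union> frob ` X)"
    have G: "is_subfield G" unfolding G_def by (rule gen_sub)
    have "W2 \<union> frob ` X \<subseteq> G" unfolding G_def by (rule gen_incl)
    then have W2G: "W2 \<subseteq> G" "frob ` X \<subseteq> G" unfolding Un_subset_iff by (rule conjunct1, rule conjunct2)
    have "Kpp \<union> frob ` Y \<union> frob ` X \<subseteq> G"
      by (intro Un_least order_trans[OF KppW2(1) W2G(1)] order_trans[OF frobYW2 W2G(1)] W2G(2))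
    then have "gen_field (Kpp \<union> frob ` Y \<union> frob ` X) \<subseteq> G" by (rule gen_min[OF G])
    then have KpG: "Kp \<subseteq> G" using Kp_eq by (simp only:)
    have "Kp \<union> Y \<subseteq> G" by (intro Un_least KpG order_trans[OF KppW2(2) W2G(1)])
    then have "gen_field (Kp \<union> Y) \<subseteq> G" by (rule gen_min[OF G])
    then show "W1 \<subseteq> gen_field (W2 \<union> frob ` X)" using Y(2) unfolding G_def by (simp only:)
  qed
  have "\<forall>z\<in>frob ` X. z ^ CHAR('a) \<in> W2"
    using KppW2(1) Kpp_img frob_in_frob_pow_1[OF cp] unfolding Kp_def frob_def by blast
  then obtain m' where m': "m' \<le> card (frob ` X)" "R.dimension (p ^ m') W2 W1"
    using ub_dim[OF cp W2 finite_imageI[OF Xfin]] W1_eq unfolding p_def by auto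
  have m's: "m' \<le> s" using m'(1) card_image_le[OF Xfin, of frob] unfolding s_def by linarith
  have d10: "R.dimension (p ^ t * p ^ m * p ^ m') Kpp W1"
    by (rule R.telescopic_base[OF subfield_RR[OF Kpp] subfield_RR[OF W2] d8 m'(2)])
  have "p ^ t * p ^ m * p ^ m' = p ^ t * p ^ s * p ^ t"
    using R.dimension_is_inj[OF subfield_RR[OF Kpp] d10 d5] .
  then have "p ^ (t + m + m') = p ^ (t + s + t)" by (simp add: power_add)
  then have "t + m + m' = t + s + t" using p1 by (simp add: power_inject_exp)
  then have ms: "m' = s" using m(1) m's by linarith

  have e1: "ext_degree W1 W2 = enat (p ^ s)" using ext_degree_dim[OF W2 m'(2)] ms by simp
  have e2: "ext_degree UNIV W1 = enat (p ^ s)" using ext_degree_dim[OF W1_sub d2] .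
  have comp: "composite W2 (frob_pow 1) = W1"
    unfolding composite_def Kp_def[symmetric]
  proof
    show "gen_field (W2 \<union> Kp) \<subseteq> W1" using gen_min[OF W1_sub] W2W1 KpW1 by blast
    show "W1 \<subseteq> gen_field (W2 \<union> Kp)" unfolding Y(2)[symmetric] using KppW2 by (intro gen_mono) blast
  qed
  show ?thesis
  proof (intro exI[of _ W2] conjI)
    show "frob_pow 2 \<subseteq> W2" using KppW2(1) unfolding Kpp_def .
    show "ext_degree W1 W2 = ext_degree UNIV W1" using e1 e2 by simp
  qed (fact W2 W2W1 comp)+
qed


end
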